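(* Let $\rho_{\mathrm W}=\frac{1-\eta}{4}\mathbb{1}\otimes\mathbb{1}+\eta|\psi^-\rangle\langle\psi^-|$ be the two-qubit Werner state, where $|\psi^-\rangle=\frac{1}{\sqrt2}(|01\rangle-|10\rangle)$ and $\eta\in[0,1]$. Let $\pm\vec n_1,\dots,\pm\vec n_6$ be the 12 vertices of a regular icosahedron inscribed in the unit sphere of $\mathbb{R}^3$. Suppose the assemblage generated on Bob's side by Alice's six projective measurements of the observables $\vec n_k\cdot\vec\sigma$, $k=1,\dots,6$, admits a local hidden state model. Then $$\eta\le \frac{3+\sqrt5}{3(1+\sqrt5)}\approx 0.5393.$$
   Context: $\vec\sigma=(\sigma_x,\sigma_y,\sigma_z)$ denotes the vector of Pauli matrices. A local hidden state model for an assemblage $\{\sigma_{i|X}\}$ means that there exist: - a probability distribution $\{\kappa_\lambda\}$, - response distributions $p^{(\lambda)}_i(x)$, - qubit density matrices $\rho^{(\lambda)}$, such that $\sigma_{i|X}=\sum_\lambda\kappa_\lambda p^{(\lambda)}_i(x)\rho^{(\lambda)}$ for every measurement $X$ in the given set and every outcome $i$. The assemblage is defined by $\sigma_{i|X}=\mathrm{Tr}_A[(\Pi^X_i\otimes\mathbb{1})\rho_{\mathrm W}]$, where $\Pi^X_i$ are the eigenprojectors of the observable $X$. *)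

theory Defs
  imports "Jordan_Normal_Form.Matrix" "Jordan_Normal_Form.Conjugate"
begin

(* Qubit operators are complex 2x2 matrices; two-qubit operators are 4x4 matrices
   in the product basis |ab> = e_(2a+b), a = Alice's qubit, b = Bob's qubit. *)

definition sigma_x :: "complex mat" where
  "sigma_x = mat_of_rows_list 2 [[0, 1], [1, 0]]"
definition sigma_y :: "complex mat" where
  "sigma_y = mat_of_rows_list 2 [[0, - \<i>], [\<i>, 0]]"
definition sigma_z :: "complex mat" where
  "sigma_z = mat_of_rows_list 2 [[1, 0], [0, -1]]"

definition n_dot_sigma :: "real vec \<Rightarrow> complex mat" where
  "n_dot_sigma n = complex_of_real (n $ 0) \<cdot>\<^sub>m sigma_x + complex_of_real (n $ 1) \<cdot>\<^sub>m sigma_y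
                   + complex_of_real (n $ 2) \<cdot>\<^sub>m sigma_z"

(* eigenprojectors of n.sigma (|n| = 1): outcome i=0 <-> eigenvalue +1, i=1 <-> eigenvalue -1 *)
definition eig_proj :: "real vec \<Rightarrow> nat \<Rightarrow> complex mat" where
  "eig_proj n i = (1/2) \<cdot>\<^sub>m (1\<^sub>m 2 + (if i = 0 then 1 else -1) \<cdot>\<^sub>m n_dot_sigma n)"

definition kron :: "complex mat \<Rightarrow> complex mat \<Rightarrow> complex mat" where
  "kron A B = mat (dim_row A * dim_row B) (dim_col A * dim_col B)
     (\<lambda>(i, j). A $$ (i div dim_row B, j div dim_col B) * B $$ (i mod dim_row B, j mod dim_col B))"

definition ptrace_A :: "complex mat \<Rightarrow> complex mat" where
  "ptrace_A M = mat 2 2 (\<lambda>(i, j). \<Sum>a<2. M $$ (2 * a + i, 2 * a + j))"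

definition psi_minus :: "complex vec" where
  "psi_minus = vec_of_list [0, 1 / complex_of_real (sqrt 2), - 1 / complex_of_real (sqrt 2), 0]"

definition ket_bra :: "complex vec \<Rightarrow> complex mat" where
  "ket_bra v = mat (dim_vec v) (dim_vec v) (\<lambda>(i, j). v $ i * cnj (v $ j))"

definition werner :: "real \<Rightarrow> complex mat" where
  "werner \<eta> = complex_of_real ((1 - \<eta>) / 4) \<cdot>\<^sub>m 1\<^sub>m 4
               + complex_of_real \<eta> \<cdot>\<^sub>m ket_bra psi_minus"

definition assemblage :: "real \<Rightarrow> real vec \<Rightarrow> nat \<Rightarrow> complex mat" where
  "assemblage \<eta> n i = ptrace_A (kron (eig_proj n i) (1\<^sub>m 2) * werner \<eta>)"

definition density_qubit :: "complex mat \<Rightarrow> bool" where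
  "density_qubit A \<longleftrightarrow> A \<in> carrier_mat 2 2
     \<and> (\<forall>i<2. \<forall>j<2. A $$ (i, j) = cnj (A $$ (j, i)))
     \<and> (\<forall>v \<in> carrier_vec 2. Im (conjugate v \<bullet> (A *\<^sub>v v)) = 0 \<and> Re (conjugate v \<bullet> (A *\<^sub>v v)) \<ge> 0)
     \<and> A $$ (0, 0) + A $$ (1, 1) = 1"

(* LHS model (matrix identity stated entrywise; all matrices involved are 2x2) for the assemblage generated by the measurements of n_k . sigma, k in K
   (two outcomes i in {0,1}); hidden variables range over a finite index set L. *)
definition has_LHS :: "real \<Rightarrow> (nat \<Rightarrow> real vec) \<Rightarrow> nat set \<Rightarrow> bool" where
  "has_LHS \<eta> n K \<longleftrightarrow>
     (\<exists>(L :: nat set) (\<kappa> :: nat \<Rightarrow> real) (p :: nat \<Rightarrow> nat \<Rightarrow> nat \<Rightarrow> real) (\<rho> :: nat \<Rightarrow> complex mat).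
        finite L \<and> (\<forall>l\<in>L. \<kappa> l \<ge> 0) \<and> (\<Sum>l\<in>L. \<kappa> l) = 1
        \<and> (\<forall>l\<in>L. \<forall>x\<in>K. (\<forall>i<2. p l x i \<ge> 0) \<and> (\<Sum>i<2. p l x i) = 1)
        \<and> (\<forall>l\<in>L. density_qubit (\<rho> l))
        \<and> (\<forall>x\<in>K. \<forall>i<2. \<forall>a<2. \<forall>b<2. assemblage \<eta> (n x) i $$ (a, b)
              = (\<Sum>l\<in>L. complex_of_real (\<kappa> l * p l x i) * \<rho> l $$ (a, b))))"

(* golden ratio and the standard regular icosahedron inscribed in the unit sphere:
   the 12 cyclic permutations of (0, +-1, +-phi), normalised *)
definition phi_gold :: real where "phi_gold = (1 + sqrt 5) / 2"

definition std_icosa :: "real vec set" where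
  "std_icosa = (\<lambda>v. (1 / sqrt (1 + phi_gold\<^sup>2)) \<cdot>\<^sub>v v) `
     {vec_of_list [0, s, t * phi_gold] | s t. s \<in> {-1, 1} \<and> t \<in> {-1, 1}}
   \<union> (\<lambda>v. (1 / sqrt (1 + phi_gold\<^sup>2)) \<cdot>\<^sub>v v) `
     {vec_of_list [s, t * phi_gold, 0] | s t. s \<in> {-1, 1} \<and> t \<in> {-1, 1}}
   \<union> (\<lambda>v. (1 / sqrt (1 + phi_gold\<^sup>2)) \<cdot>\<^sub>v v) `
     {vec_of_list [t * phi_gold, 0, s] | s t. s \<in> {-1, 1} \<and> t \<in> {-1, 1}}"

definition icosa_vertex_sets :: "real vec set set" where
  "icosa_vertex_sets = {(\<lambda>v. R *\<^sub>v v) ` std_icosa | R.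
       R \<in> carrier_mat 3 3 \<and> transpose_mat R * R = 1\<^sub>m 3}"

end

theory Submission
  imports Defs "Jordan_Normal_Form.Determinant"
begin


definition ps :: "nat \<Rightarrow> complex" where "ps i = (if i = 1 then 1 / complex_of_real (sqrt 2) else if i = 2 then - 1 / complex_of_real (sqrt 2) else 0)"
lemma werner_entry: "i < 4 \<Longrightarrow> j < 4 \<Longrightarrow> werner \<eta> $$ (i,j) =
   (if i = j then complex_of_real ((1-\<eta>)/4) else 0) + complex_of_real \<eta> * (ps i * cnj (ps j))"
  unfolding werner_def ket_bra_def psi_minus_def
  apply (simp add: ps_def)
  apply (auto simp: numeral_eq_Suc less_Suc_eq)
  done

lemma sxyz: "sigma_x \<in> carrier_mat 2 2" "sigma_y \<in> carrier_mat 2 2" "sigma_z \<in> carrier_mat 2 2"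
  unfolding sigma_x_def sigma_y_def sigma_z_def mat_of_rows_list_def by auto
lemma eig_dim: "eig_proj n i \<in> carrier_mat 2 2"
  unfolding eig_proj_def n_dot_sigma_def by (intro smult_carrier_mat add_carrier_mat one_carrier_mat sxyz)
lemma dim_psi: "dim_vec psi_minus = 4" by (simp add: psi_minus_def)
lemma werner_dim: "werner \<eta> \<in> carrier_mat 4 4"
  unfolding werner_def ket_bra_def dim_psi by (intro smult_carrier_mat add_carrier_mat one_carrier_mat mat_carrier)

lemma eig_entry: "x < 2 \<Longrightarrow> y < 2 \<Longrightarrow> eig_proj n i $$ (x,y) = (let t = (if i = 0 then 1 else -1::complex) in
   if x = 0 \<and> y = 0 then (1 + t * n$2)/2 else if x = 1 \<and> y = 1 then (1 - t*n$2)/2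
   else if x = 0 then t * (n$0 - \<i> * n$1)/2 else t * (n$0 + \<i> * n$1)/2)"
  unfolding eig_proj_def n_dot_sigma_def sigma_x_def sigma_y_def sigma_z_def mat_of_rows_list_def
  by (auto simp: less_Suc_eq numeral_eq_Suc Let_def field_simps)

lemma sum4: "(\<Sum>m<(4::nat). f m) = f 0 + f 1 + f 2 + (f 3 :: complex)"
  by (simp add: eval_nat_numeral)
lemma sum2: "(\<Sum>m<(2::nat). f m) = f 0 + (f 1 :: complex)"
  by (simp add: eval_nat_numeral)

lemma KW_entry: assumes "p < 4" "q < 4"
  shows "(kron (eig_proj n i) (1\<^sub>m 2) * werner \<eta>) $$ (p,q) =
    (\<Sum>m<4. eig_proj n i $$ (p div 2, m div 2) * (1\<^sub>m 2 :: complex mat) $$ (p mod 2, m mod 2) * werner \<eta> $$ (m, q))"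
proof -
  have d: "dim_row (eig_proj n i) = 2" "dim_col (eig_proj n i) = 2" using eig_dim[of n i] by auto
  have w: "dim_row (werner \<eta>) = 4" "dim_col (werner \<eta>) = 4" using werner_dim[of \<eta>] by auto
  show ?thesis using assms
    by (simp add: kron_def d w scalar_prod_def row_def col_def atLeast0LessThan)
qed

lemma asm_gen: "a < 2 \<Longrightarrow> b < 2 \<Longrightarrow> assemblage \<eta> n i $$ (a,b) =
   (\<Sum>x<2. \<Sum>y<2. eig_proj n i $$ (x,y) * werner \<eta> $$ (2*y+a, 2*x+b))"
proof -
  assume ab: "a < 2" "b < 2"
  have "assemblage \<eta> n i $$ (a,b) = (\<Sum>x<2. (kron (eig_proj n i) (1\<^sub>m 2) * werner \<eta>) $$ (2*x+a, 2*x+b))"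
    unfolding assemblage_def ptrace_A_def using ab by simp
  also have "\<dots> = (\<Sum>x<2. \<Sum>y<2. eig_proj n i $$ (x,y) * werner \<eta> $$ (2*y+a, 2*x+b))"
    apply (rule sum.cong[OF refl])
    subgoal for x
      using ab
      apply (subst KW_entry)
      apply (simp_all add: sum4 sum2)
      apply (auto simp: less_Suc_eq numeral_eq_Suc)
      done
    done
  finally show ?thesis .
qed


lemma asm_explicit: assumes "a < 2" "b < 2"
  shows "assemblage \<eta> n i $$ (a,b) = (let t = (if i = 0 then 1 else -1::complex) in
     (if a = 0 \<and> b = 0 then (1 - t*\<eta>*n$2)/4
      else if a = 1 \<and> b = 1 then (1 + t*\<eta>*n$2)/4
      else if a = 0 then - t*\<eta>*(n$0 - \<i>*n$1)/4 else - t*\<eta>*(n$0 + \<i>*n$1)/4))"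
proof -
  have s2: "sqrt 2 * sqrt 2 = (2::real)" by simp
  have c2: "complex_of_real (sqrt 2) * complex_of_real (sqrt 2) = 2"
    by (metis of_real_mult s2 of_real_numeral)
  have ab: "a = 0 \<or> a = 1" "b = 0 \<or> b = 1" using assms by auto
  have c2': "x / (complex_of_real (sqrt 2) * complex_of_real (sqrt 2)) = x / 2" for x using c2 by simp
  show ?thesis
    using ab
    apply (elim disjE)
    apply (simp_all add: asm_gen sum2 werner_entry eig_entry ps_def c2' Let_def)
    apply (simp_all add: field_simps)
    done
qed



definition TT :: "real vec \<Rightarrow> complex mat \<Rightarrow> real" where
 "TT n M = n$0 * Re(M$$(0,1) + M$$(1,0)) + n$1 * Re(\<i> * (M$$(0,1) - M$$(1,0))) + n$2 * Re(M$$(0,0) - M$$(1,1))"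

lemma TT_asm: "TT n (assemblage \<eta> n 0) - TT n (assemblage \<eta> n 1) = - \<eta> * ((n$0)^2 + (n$1)^2 + (n$2)^2)"
  unfolding TT_def by (simp add: asm_explicit Let_def field_simps power2_eq_square)

lemma TT_lin: assumes "\<forall>a<2. \<forall>b<2. A$$(a,b) = (\<Sum>l\<in>L. complex_of_real (c l) * B l $$ (a,b))"
  shows "TT n A = (\<Sum>l\<in>L. c l * TT n (B l))"
  unfolding TT_def using assms
  by (simp add: sum.distrib[symmetric] sum_subtractf[symmetric] sum_distrib_left sum_distrib_right algebra_simps Re_sum)

lemma quad2: assumes "M \<in> carrier_mat 2 2" "dim_vec v = 2"
  shows "conjugate v \<bullet> (M *\<^sub>v v) = cnj(v$0) * (M$$(0,0)*v$0 + M$$(0,1)*v$1) + cnj(v$1)*(M$$(1,0)*v$0 + M$$(1,1)*v$1)"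
  using assms by (simp add: scalar_prod_def row_def atLeast0LessThan sum2)

lemma bloch: assumes "density_qubit M"
  shows "(Re(M$$(0,1) + M$$(1,0)))^2 + (Re(\<i> * (M$$(0,1) - M$$(1,0))))^2 + (Re(M$$(0,0) - M$$(1,1)))^2 \<le> 1"
proof -
  have C: "M \<in> carrier_mat 2 2" and H: "\<And>i j. i<2 \<Longrightarrow> j<2 \<Longrightarrow> M $$ (i, j) = cnj (M $$ (j, i))"
   and P: "\<And>v. v \<in> carrier_vec 2 \<Longrightarrow> Re (conjugate v \<bullet> (M *\<^sub>v v)) \<ge> 0"
   and T: "M $$ (0, 0) + M $$ (1, 1) = 1" using assms unfolding density_qubit_def by blast+
  define a where "a = Re (M$$(0,0))"
  define d where "d = Re (M$$(1,1))"
  define b where "b = M$$(0,1)"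
  have i00: "Im (M$$(0,0)) = 0" using arg_cong[OF H[of 0 0], of Im] by simp
  have i11: "Im (M$$(1,1)) = 0" using arg_cong[OF H[of 1 1], of Im] by simp
  have e00: "M$$(0,0) = complex_of_real a" using i00 unfolding a_def by (simp add: complex_eq_iff)
  have e11: "M$$(1,1) = complex_of_real d" using i11 unfolding d_def by (simp add: complex_eq_iff)
  have e10: "M$$(1,0) = cnj b" using H[of 1 0] unfolding b_def by simp
  have ad: "a + d = 1" using arg_cong[OF T, of Re] unfolding a_def d_def by simp
  have dimM: "dim_row M = 2" "dim_col M = 2" using C by auto
  note E = e00 e11 e10 b_def[symmetric] e11[unfolded One_nat_def] e10[unfolded One_nat_def] b_def[symmetric, unfolded One_nat_def]
  have q1: "Re (conjugate (vec_of_list [- b, complex_of_real a]) \<bullet> (M *\<^sub>v vec_of_list [- b, complex_of_real a])) = a * (a*d - (cmod b)^2)"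
    apply (subst quad2[OF C], simp)
    apply (simp add: E cmod_power2)
    apply (simp add: algebra_simps power2_eq_square)
    done
  have q2: "Re (conjugate (vec_of_list [complex_of_real d, - cnj b]) \<bullet> (M *\<^sub>v vec_of_list [complex_of_real d, - cnj b])) = d * (a*d - (cmod b)^2)"
    apply (subst quad2[OF C], simp)
    apply (simp add: E cmod_power2)
    apply (simp add: algebra_simps power2_eq_square)
    done
  have v1: "vec_of_list [- b, complex_of_real a] \<in> carrier_vec 2" by (rule carrier_vecI) simp
  have v2: "vec_of_list [complex_of_real d, - cnj b] \<in> carrier_vec 2" by (rule carrier_vecI) simp
  have "a * (a*d - (cmod b)^2) \<ge> 0" using P[OF v1] q1 by linarith
  moreover have "d * (a*d - (cmod b)^2) \<ge> 0" using P[OF v2] q2 by linarith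
  ultimately have "(a + d) * (a*d - (cmod b)^2) \<ge> 0" by (metis add_nonneg_nonneg distrib_right)
  hence ge: "a*d - (cmod b)^2 \<ge> 0" using ad by simp
  have "(Re(M$$(0,1) + M$$(1,0)))^2 + (Re(\<i> * (M$$(0,1) - M$$(1,0))))^2 + (Re(M$$(0,0) - M$$(1,1)))^2
     = 4 * (cmod b)^2 + (a-d)^2"
    by (simp add: E cmod_power2)
  also have "\<dots> \<le> (a+d)^2" using ge by (simp add: power2_eq_square algebra_simps)
  finally show ?thesis using ad by simp
qed



definition uc :: "nat \<Rightarrow> nat \<Rightarrow> real" where
 "uc p j = [[0,1,phi_gold],[0,1,-phi_gold],[1,phi_gold,0],[1,-phi_gold,0],[phi_gold,0,1],[-phi_gold,0,1]] ! (p-1) ! j"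

lemma phi_gt1: "phi_gold > 1"
proof -
  have "sqrt 5 > 1" by simp
  thus ?thesis unfolding phi_gold_def by simp
qed

lemma phi_sq: "phi_gold^2 = phi_gold + 1"
  unfolding phi_gold_def by (simp add: power2_eq_square field_simps)

lemma all3: "(\<forall>j<(3::nat). Q j) \<longleftrightarrow> Q 0 \<and> Q 1 \<and> Q 2"
  by (auto simp add: numeral_3_eq_3 numeral_2_eq_2 less_Suc_eq)

lemma sum3: "(\<Sum>j<(3::nat). f j) = f 0 + f 1 + (f 2 :: real)"
  by (simp add: eval_nat_numeral)

lemma sum16: "(\<Sum>p\<in>{1..(6::nat)}. f p) = f 1 + f 2 + f 3 + f 4 + f 5 + (f 6 :: real)"
  by (simp add: eval_nat_numeral atLeastAtMostSuc_conv)

lemma signs: assumes "e1 \<in> {-1,1::real}" "e2 \<in> {-1,1::real}" "e3 \<in> {-1,1::real}" "e4 \<in> {-1,1::real}" "e5 \<in> {-1,1::real}" "e6 \<in> {-1,1::real}"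
  shows "(e3+e4)^2 + (e1+e2)^2 + (e5+e6)^2 + (e5-e6)^2 + (e3-e4)^2 + (e1-e2)^2 \<le> 12 \<and>
         2*((e3+e4)*(e5-e6) + (e1+e2)*(e3-e4) + (e5+e6)*(e1-e2)) + (e5-e6)^2 + (e3-e4)^2 + (e1-e2)^2 \<le> 16"
  using assms by (simp; elim disjE; simp)

lemma key: assumes "(\<Sum>j<3. (y j)^2) \<le> (1::real)"
  shows "(\<Sum>p\<in>{1..6}. \<bar>\<Sum>j<3. uc p j * y j\<bar>) \<le> 2 * phi_gold * sqrt (1 + phi_gold^2)"
proof -
  define \<phi> where "\<phi> = phi_gold"
  have p1: "\<phi> > 1" using phi_gt1 \<phi>_def by simp
  have p2: "\<phi>^2 = \<phi> + 1" using phi_sq \<phi>_def by simp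
  define X where "X p = (\<Sum>j<3. uc p j * y j)" for p
  define e where "e p = (if X p \<ge> 0 then 1 else -1::real)" for p
  have e: "e p \<in> {-1,1}" for p unfolding e_def by simp
  have "(\<Sum>p\<in>{1..6}. \<bar>X p\<bar>) = (\<Sum>p\<in>{1..6}. e p * X p)"
    by (rule sum.cong) (auto simp: e_def)
  also have "\<dots> = (e 3 + e 4 + \<phi> * (e 5 - e 6)) * y 0 + (e 1 + e 2 + \<phi> * (e 3 - e 4)) * y 1
                  + (e 5 + e 6 + \<phi> * (e 1 - e 2)) * y 2" (is "_ = ?V0 * _ + ?V1 * _ + ?V2 * _")
    unfolding sum16 X_def sum3 uc_def \<phi>_def[symmetric] by (simp add: algebra_simps)
  also have "\<dots> \<le> 2 * \<phi> * sqrt (1 + \<phi>^2)"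
  proof -
    define M where "M = 2 * \<phi> * sqrt (1 + \<phi>^2)"
    have Mpos: "M > 0" unfolding M_def using p1 by (intro mult_pos_pos) (auto intro: add_pos_nonneg)
    have M2: "M^2 = 16*\<phi> + 12" unfolding M_def using p1 p2
      by (simp add: power_mult_distrib algebra_simps) (simp add: power2_eq_square algebra_simps)
    have V2: "?V0^2 + ?V1^2 + ?V2^2 \<le> 16*\<phi> + 12"
    proof -
      have S: "((e 3+e 4)^2 + (e 1+e 2)^2 + (e 5+e 6)^2 + (e 5-e 6)^2 + (e 3-e 4)^2 + (e 1-e 2)^2) \<le> 12 \<and>
         2*((e 3+e 4)*(e 5-e 6) + (e 1+e 2)*(e 3-e 4) + (e 5+e 6)*(e 1-e 2)) + (e 5-e 6)^2 + (e 3-e 4)^2 + (e 1-e 2)^2 \<le> 16"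
        by (rule signs[OF e e e e e e])
      have "?V0^2 + ?V1^2 + ?V2^2 = ((e 3+e 4)^2 + (e 1+e 2)^2 + (e 5+e 6)^2 + (e 5-e 6)^2 + (e 3-e 4)^2 + (e 1-e 2)^2)
          + \<phi> * (2*((e 3+e 4)*(e 5-e 6) + (e 1+e 2)*(e 3-e 4) + (e 5+e 6)*(e 1-e 2)) + (e 5-e 6)^2 + (e 3-e 4)^2 + (e 1-e 2)^2)"
      proof -
        have "?V0^2 + ?V1^2 + ?V2^2 = ((e 3+e 4)^2 + (e 1+e 2)^2 + (e 5+e 6)^2)
           + \<phi> * (2*((e 3+e 4)*(e 5-e 6) + (e 1+e 2)*(e 3-e 4) + (e 5+e 6)*(e 1-e 2)))
           + \<phi>^2 * ((e 5-e 6)^2 + (e 3-e 4)^2 + (e 1-e 2)^2)"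
          by (simp add: power2_eq_square algebra_simps)
        thus ?thesis unfolding p2 by (simp add: algebra_simps)
      qed
      also have "\<dots> \<le> 12 + \<phi> * 16"
        using S p1 by (intro add_mono mult_left_mono) auto
      finally show ?thesis by simp
    qed
    have "0 \<le> (?V0 - M * y 0)^2 + (?V1 - M * y 1)^2 + (?V2 - M * y 2)^2" by simp
    also have "\<dots> = (?V0^2 + ?V1^2 + ?V2^2) - 2 * M * (?V0 * y 0 + ?V1 * y 1 + ?V2 * y 2) + M^2 * (\<Sum>j<3. (y j)^2)"
      unfolding sum3 by (simp add: power2_eq_square algebra_simps)
    also have "\<dots> \<le> M^2 - 2 * M * (?V0 * y 0 + ?V1 * y 1 + ?V2 * y 2) + M^2"
    proof -
      have M3: "M^2 * (\<Sum>j<3. (y j)^2) \<le> M^2" by (rule mult_left_le[OF assms]) simp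
      show ?thesis using V2 M2 M3 by linarith
    qed
    finally have "M * (?V0 * y 0 + ?V1 * y 1 + ?V2 * y 2) \<le> M * M" by (simp add: power2_eq_square)
    hence "?V0 * y 0 + ?V1 * y 1 + ?V2 * y 2 \<le> M" using Mpos by simp
    thus ?thesis unfolding M_def .
  qed
  finally show ?thesis unfolding X_def \<phi>_def .
qed




abbreviation c0 :: real where "c0 \<equiv> 1 / sqrt (1 + phi_gold\<^sup>2)"

lemma G1: assumes "m \<in> std_icosa"
  shows "dim_vec m = 3 \<and> (\<exists>p\<in>{1..6}. \<exists>\<sigma>\<in>{-1,1::real}. \<forall>j<3. m$j = \<sigma> * c0 * uc p j)"
proof -
  from assms consider (A) s t where "s\<in>{-1,1}" "t\<in>{-1,1}" "m = c0 \<cdot>\<^sub>v vec_of_list [0,s,t*phi_gold]"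
    | (B) s t where "s\<in>{-1,1}" "t\<in>{-1,1}" "m = c0 \<cdot>\<^sub>v vec_of_list [s,t*phi_gold,0]"
    | (C) s t where "s\<in>{-1,1}" "t\<in>{-1,1}" "m = c0 \<cdot>\<^sub>v vec_of_list [t*phi_gold,0,s]"
    unfolding std_icosa_def by blast
  then show ?thesis
  proof cases
    case A
    show ?thesis
      apply (rule conjI) using A(3) apply simp
      apply (rule bexI[where x = "if s*t = 1 then 1 else 2"])
      apply (rule bexI[where x = s])
      using A by (auto simp: all3 uc_def vec_of_list_index numeral_2_eq_2)
  next
    case B
    show ?thesis
      apply (rule conjI) using B(3) apply simp
      apply (rule bexI[where x = "if s*t = 1 then 3 else 4"])
      apply (rule bexI[where x = s])
      using B by (auto simp: all3 uc_def vec_of_list_index numeral_2_eq_2)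
  next
    case C
    show ?thesis
      apply (rule conjI) using C(3) apply simp
      apply (rule bexI[where x = "if s*t = 1 then 5 else 6"])
      apply (rule bexI[where x = s])
      using C by (auto simp: all3 uc_def vec_of_list_index numeral_2_eq_2)
  qed
qed

lemma memA: "s\<in>{-1,1} \<Longrightarrow> t\<in>{-1,1} \<Longrightarrow> c0 \<cdot>\<^sub>v vec_of_list [0,s,t*phi_gold] \<in> std_icosa"
  unfolding std_icosa_def by blast
lemma memB: "s\<in>{-1,1} \<Longrightarrow> t\<in>{-1,1} \<Longrightarrow> c0 \<cdot>\<^sub>v vec_of_list [s,t*phi_gold,0] \<in> std_icosa"
  unfolding std_icosa_def by blast
lemma memC: "s\<in>{-1,1} \<Longrightarrow> t\<in>{-1,1} \<Longrightarrow> c0 \<cdot>\<^sub>v vec_of_list [t*phi_gold,0,s] \<in> std_icosa"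
  unfolding std_icosa_def by blast

definition wv :: "nat \<Rightarrow> real vec" where
  "wv p = c0 \<cdot>\<^sub>v vec_of_list [uc p 0, uc p 1, uc p 2]"

lemma G2: assumes "p \<in> {1..6}" shows "wv p \<in> std_icosa"
proof -
  have "p = 1 \<or> p = 2 \<or> p = 3 \<or> p = 4 \<or> p = 5 \<or> p = 6" using assms by auto
  then show ?thesis
    using memA[of 1 1] memA[of 1 "-1"] memB[of 1 1] memB[of 1 "-1"] memC[of 1 1] memC[of 1 "-1"]
    by (auto simp: wv_def uc_def)
qed

lemma wv_idx: "j < 3 \<Longrightarrow> wv p $ j = c0 * uc p j"
  by (auto simp: wv_def vec_of_list_index less_Suc_eq numeral_3_eq_3 numeral_2_eq_2)

lemma wv_dim: "dim_vec (wv p) = 3" by (simp add: wv_def)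

lemma G3: assumes "p \<in> {1..6}" "q \<in> {1..6}" "\<sigma> \<in> {-1,1::real}" "\<forall>j<3. uc p j = \<sigma> * uc q j"
  shows "p = q"
proof -
  have p1: "phi_gold > 1" by (rule phi_gt1)
  have "p = 1 \<or> p = 2 \<or> p = 3 \<or> p = 4 \<or> p = 5 \<or> p = 6" "q = 1 \<or> q = 2 \<or> q = 3 \<or> q = 4 \<or> q = 5 \<or> q = 6"
    using assms by auto
  then show ?thesis using assms(3,4) p1 by (auto simp: all3 uc_def)
qed




lemma orth_entry: fixes Q :: "real mat" assumes "Q \<in> carrier_mat 3 3" "transpose_mat Q * Q = 1\<^sub>m 3" "j < 3" "j' < 3"
  shows "(\<Sum>i<3. Q$$(i,j) * Q$$(i,j')) = (if j = j' then 1 else 0)"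
proof -
  have "(transpose_mat Q * Q) $$ (j,j') = (if j = j' then 1 else 0)" unfolding assms(2) using assms(3,4) by simp
  moreover have "(transpose_mat Q * Q) $$ (j,j') = (\<Sum>i<3. Q$$(i,j) * Q$$(i,j'))"
    using assms(1,3,4) by (simp add: scalar_prod_def atLeast0LessThan)
  ultimately show ?thesis by simp
qed

lemma orth3: fixes Q :: "real mat" and x :: "nat \<Rightarrow> real" assumes "Q \<in> carrier_mat 3 3" "transpose_mat Q * Q = 1\<^sub>m 3"
  shows "(\<Sum>i<3. (\<Sum>j<3. Q$$(i,j) * x j)^2) = (\<Sum>j<3. (x j)^2)"
proof -
  have "(\<Sum>i<3. (\<Sum>j<3. Q$$(i,j) * x j)^2) = (\<Sum>j<3. \<Sum>j'<3. x j * x j' * (\<Sum>i<3. Q$$(i,j) * Q$$(i,j')))"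
    unfolding sum3 by (simp add: power2_eq_square algebra_simps)
  also have "\<dots> = (\<Sum>j<3. \<Sum>j'<3. x j * x j' * (if j = j' then 1 else 0))"
    using orth_entry[OF assms] by simp
  also have "\<dots> = (\<Sum>j<3. (x j)^2)" by (simp add: sum3 power2_eq_square)
  finally show ?thesis .
qed

lemma uc_norm: assumes "p \<in> {1..6}" shows "(\<Sum>j<3. (uc p j)^2) = 1 + phi_gold^2"
proof -
  have "p = 1 \<or> p = 2 \<or> p = 3 \<or> p = 4 \<or> p = 5 \<or> p = 6" using assms by auto
  then show ?thesis by (auto simp: sum3 uc_def)
qed




lemma c0_pos: "c0 > 0" by (simp add: add_pos_nonneg)

lemma bound_final: "c0 * (2 * phi_gold * sqrt (1 + phi_gold^2)) = 1 + sqrt 5"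
proof -
  have "sqrt (1 + phi_gold^2) > 0" by (simp add: add_pos_nonneg)
  hence "c0 * (2 * phi_gold * sqrt (1 + phi_gold^2)) = 2 * phi_gold" by simp
  thus ?thesis unfolding phi_gold_def by simp
qed

lemma ex4E: "\<exists>a b c d. Q a b c d \<Longrightarrow> (\<And>a b c d. Q a b c d \<Longrightarrow> R) \<Longrightarrow> R" by blast

theorem mainTheorem6:
  fixes \<eta> :: real and n :: "nat \<Rightarrow> real vec"
  assumes "0 \<le> \<eta>" and "\<eta> \<le> 1"
    and "{n k | k. k \<in> {1..6}} \<union> {- n k | k. k \<in> {1..6}} \<in> icosa_vertex_sets"
    and "has_LHS \<eta> n {1..6}"
  shows "\<eta> \<le> (3 + sqrt 5) / (3 * (1 + sqrt 5))"
proof -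
  obtain R where R: "R \<in> carrier_mat 3 3" "transpose_mat R * R = 1\<^sub>m 3"
     and S: "{n k | k. k \<in> {1..6}} \<union> {- n k | k. k \<in> {1..6}} = (\<lambda>v. R *\<^sub>v v) ` std_icosa"
    using assms(3) unfolding icosa_vertex_sets_def by blast
  have RT: "transpose_mat (transpose_mat R) * transpose_mat R = 1\<^sub>m 3"
    using mat_mult_left_right_inverse[OF transpose_carrier_mat[THEN iffD2, OF R(1)] R(1) R(2)] by simp
  have RTc: "transpose_mat R \<in> carrier_mat 3 3" using R(1) by simp
  have Rinj: "v = w" if v: "v \<in> carrier_vec 3" and w: "w \<in> carrier_vec 3" and eq: "R *\<^sub>v v = R *\<^sub>v w" for v w
  proof -
    have "v = (transpose_mat R * R) *\<^sub>v v" using R(2) v by simp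
    also have "\<dots> = transpose_mat R *\<^sub>v (R *\<^sub>v v)" using RTc R(1) v by simp
    also have "\<dots> = transpose_mat R *\<^sub>v (R *\<^sub>v w)" using eq by simp
    also have "\<dots> = (transpose_mat R * R) *\<^sub>v w" using RTc R(1) w by simp
    also have "\<dots> = w" using R(2) w by simp
    finally show ?thesis .
  qed
  have "\<forall>k\<in>{1..6}. \<exists>m. m \<in> std_icosa \<and> n k = R *\<^sub>v m"
  proof
    fix k assume k: "k \<in> {1..(6::nat)}"
    have "n k \<in> {n k | k. k \<in> {1..6}} \<union> {- n k | k. k \<in> {1..6}}" using k by blast
    thus "\<exists>m. m \<in> std_icosa \<and> n k = R *\<^sub>v m" unfolding S by blast
  qed
  then obtain m where m0: "\<forall>k\<in>{1..6}. m k \<in> std_icosa \<and> n k = R *\<^sub>v m k"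
    using bchoice[of "{1..6::nat}" "\<lambda>k m. m \<in> std_icosa \<and> n k = R *\<^sub>v m"] by blast
  have m: "m k \<in> std_icosa \<and> n k = R *\<^sub>v m k" if "k\<in>{1..6}" for k using m0 that by blast
  have "\<forall>k\<in>{1..6}. \<exists>p\<in>{1..6}. \<exists>\<sigma>\<in>{-1,1::real}. \<forall>j<3. m k $ j = \<sigma>*c0*uc p j"
  proof
    fix k assume k: "k \<in> {1..(6::nat)}"
    show "\<exists>p\<in>{1..6}. \<exists>\<sigma>\<in>{-1,1::real}. \<forall>j<3. m k $ j = \<sigma>*c0*uc p j"
      using G1[OF conjunct1[OF m[OF k]]] by (rule conjunct2)
  qed
  then obtain idx where idx0: "\<forall>k\<in>{1..6}. idx k \<in> {1..6} \<and> (\<exists>\<sigma>\<in>{-1,1::real}. \<forall>j<3. m k $ j = \<sigma>*c0*uc (idx k) j)"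
    using bchoice[of "{1..6::nat}" "\<lambda>k p. p \<in> {1..6} \<and> (\<exists>\<sigma>\<in>{-1,1::real}. \<forall>j<3. m k $ j = \<sigma>*c0*uc p j)"] by blast
  have idx: "idx k \<in> {1..6} \<and> (\<exists>\<sigma>\<in>{-1,1::real}. \<forall>j<3. m k $ j = \<sigma>*c0*uc (idx k) j)" if "k\<in>{1..6}" for k
    using idx0 that by blast
  have "\<forall>k\<in>{1..6}. \<exists>\<sigma>. \<sigma> \<in> {-1,1::real} \<and> (\<forall>j<3. m k $ j = \<sigma>*c0*uc (idx k) j)" using idx by blast
  then obtain sg where sg0: "\<forall>k\<in>{1..6}. sg k \<in> {-1,1::real} \<and> (\<forall>j<3. m k $ j = sg k*c0*uc (idx k) j)"
    using bchoice[of "{1..6::nat}" "\<lambda>k \<sigma>. \<sigma> \<in> {-1,1::real} \<and> (\<forall>j<3. m k $ j = \<sigma>*c0*uc (idx k) j)"] by blast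
  have sg: "sg k \<in> {-1,1::real} \<and> (\<forall>j<3. m k $ j = sg k*c0*uc (idx k) j)" if "k\<in>{1..6}" for k
    using sg0 that by blast
  have mdim: "m k \<in> carrier_vec 3" if "k\<in>{1..6}" for k
    using G1[OF conjunct1[OF m[OF that]]] by (intro carrier_vecI) blast
  have surj: "{1..6} \<subseteq> idx ` {1..6}"
  proof
    fix p assume p: "p \<in> {1..(6::nat)}"
    have "R *\<^sub>v wv p \<in> (\<lambda>v. R *\<^sub>v v) ` std_icosa" using G2[OF p] by blast
    hence "R *\<^sub>v wv p \<in> {n k | k. k \<in> {1..6}} \<union> {- n k | k. k \<in> {1..6}}" unfolding S .
    then obtain k \<tau> where k: "k \<in> {1..6}" and \<tau>: "\<tau> \<in> {-1,1::real}" and eq: "R *\<^sub>v wv p = \<tau> \<cdot>\<^sub>v (R *\<^sub>v m k)"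
    proof (elim UnE CollectE exE conjE)
      fix k assume "R *\<^sub>v wv p = n k" "k \<in> {1..6}"
      moreover have "n k = 1 \<cdot>\<^sub>v (R *\<^sub>v m k)" using m[OF \<open>k \<in> {1..6}\<close>] by (intro eq_vecI) auto
      ultimately show ?thesis using that[of k 1] by simp
    next
      fix k assume "R *\<^sub>v wv p = - n k" "k \<in> {1..6}"
      moreover have "- n k = (-1) \<cdot>\<^sub>v (R *\<^sub>v m k)" using m[OF \<open>k \<in> {1..6}\<close>] by (intro eq_vecI) auto
      ultimately show ?thesis using that[of k "-1"] by simp
    qed
    have c1: "wv p \<in> carrier_vec 3" using wv_dim[of p] by (intro carrier_vecI)
    have c2: "\<tau> \<cdot>\<^sub>v m k \<in> carrier_vec 3" using mdim[OF k] by (simp only: smult_carrier_vec)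
    have e2: "R *\<^sub>v wv p = R *\<^sub>v (\<tau> \<cdot>\<^sub>v m k)" unfolding eq mult_mat_vec[OF R(1) mdim[OF k]] ..
    have "wv p = \<tau> \<cdot>\<^sub>v m k" by (rule Rinj[OF c1 c2 e2])
    hence "\<forall>j<3. c0 * uc p j = \<tau> * (sg k * c0 * uc (idx k) j)"
      using sg[OF k] wv_idx mdim[OF k] by (metis carrier_vecD index_smult_vec(1))
    hence "\<forall>j<3. uc p j = (\<tau> * sg k) * uc (idx k) j" using c0_pos by (auto simp: algebra_simps)
    moreover have "\<tau> * sg k \<in> {-1,1}" using \<tau> sg[OF k] by auto
    ultimately have "p = idx k" using G3 p idx[OF k] by blast
    thus "p \<in> idx ` {1..6}" using k by blast
  qed
  have img: "idx ` {1..6} = {1..6}" using surj idx by auto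
  have "card (idx ` {1..6}) = card {1..(6::nat)}" by (simp only: img)
  hence inj: "inj_on idx {1..6}" by (rule eq_card_imp_inj_on[OF finite_atLeastAtMost])
  have nki: "n k $ i = (\<Sum>j<3. R$$(i,j) * m k $ j)" if k: "k\<in>{1..6}" and i: "i<3" for k i
  proof -
    have "n k = R *\<^sub>v m k" using m[OF k] by blast
    hence "n k $ i = row R i \<bullet> m k" using R(1) i by simp
    also have "\<dots> = (\<Sum>j<3. R$$(i,j) * m k $ j)" using R(1) i mdim[OF k] by (simp add: scalar_prod_def atLeast0LessThan)
    finally show ?thesis .
  qed
  have mkj: "m k $ j = sg k * c0 * uc (idx k) j" if "k\<in>{1..6}" "j<3" for k j using sg that by blast
  have sgsq: "(sg k)^2 = 1" if "k\<in>{1..6}" for k using sg[OF that] by auto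
  have abssg: "\<bar>sg k\<bar> = 1" if "k\<in>{1..6}" for k using sg[OF that] by auto
  have c0sq: "c0^2 * (1 + phi_gold^2) = 1"
  proof -
    have "(sqrt (1 + phi_gold^2))^2 = 1 + phi_gold^2" by (simp add: add_pos_nonneg)
    moreover have "1 + phi_gold^2 > 0" by (simp add: add_pos_nonneg)
    ultimately show ?thesis by (simp add: power_divide)
  qed
  have nn: "(n k $ 0)^2 + (n k $ 1)^2 + (n k $ 2)^2 = 1" if k: "k\<in>{1..6}" for k
  proof -
    have "(n k $ 0)^2 + (n k $ 1)^2 + (n k $ 2)^2 = (\<Sum>i<3. (n k $ i)^2)" by (simp only: sum3)
    also have "\<dots> = (\<Sum>i<3. (\<Sum>j<3. R$$(i,j) * m k $ j)^2)" by (rule sum.cong) (simp_all add: nki[OF k])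
    also have "\<dots> = (\<Sum>j<3. (m k $ j)^2)" by (rule orth3[OF R])
    also have "\<dots> = (\<Sum>j<3. (sg k * c0)^2 * (uc (idx k) j)^2)" by (rule sum.cong) (simp_all add: mkj[OF k] power_mult_distrib power_divide)
    also have "\<dots> = (sg k * c0)^2 * (1 + phi_gold^2)" by (simp only: sum_distrib_left[symmetric] uc_norm[OF conjunct1[OF idx[OF k]]])
    also have "\<dots> = 1" by (simp only: power_mult_distrib mult.assoc c0sq sgsq[OF k] mult_1)
    finally show ?thesis .
  qed
  have bound: "(\<Sum>k\<in>{1..6}. \<bar>TT (n k) \<rho>\<bar>) \<le> 1 + sqrt 5" if dq: "density_qubit \<rho>" for \<rho>
  proof -
    define b where "b i = (if i = 0 then Re(\<rho>$$(0,1) + \<rho>$$(1,0)) else if i = 1 then Re(\<i> * (\<rho>$$(0,1) - \<rho>$$(1,0))) else Re(\<rho>$$(0,0) - \<rho>$$(1,1)))" for i :: nat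
    have bb: "(\<Sum>i<3. (b i)^2) \<le> 1" using bloch[OF dq] unfolding sum3 b_def by simp
    define y where "y j = (\<Sum>i<3. R$$(i,j) * b i)" for j
    have yy: "(\<Sum>j<3. (y j)^2) \<le> 1"
    proof -
      have "(\<Sum>j<3. (y j)^2) = (\<Sum>j<3. (\<Sum>i<3. transpose_mat R $$ (j,i) * b i)^2)"
        unfolding y_def using R(1) by (intro sum.cong refl) (simp add: sum3)
      also have "\<dots> = (\<Sum>i<3. (b i)^2)" by (rule orth3[OF RTc RT])
      finally show ?thesis using bb by simp
    qed
    have TTk: "\<bar>TT (n k) \<rho>\<bar> = c0 * \<bar>\<Sum>j<3. uc (idx k) j * y j\<bar>" if k: "k\<in>{1..6}" for k
    proof -
      have "TT (n k) \<rho> = (\<Sum>i<3. n k $ i * b i)" unfolding TT_def sum3 b_def by simp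
      also have "\<dots> = (\<Sum>i<3. (\<Sum>j<3. R$$(i,j) * m k $ j) * b i)" by (rule sum.cong) (simp_all add: nki[OF k])
      also have "\<dots> = (\<Sum>j<3. m k $ j * y j)" unfolding y_def sum3 by (simp add: algebra_simps)
      also have "\<dots> = (\<Sum>j<3. (sg k * c0) * (uc (idx k) j * y j))" by (rule sum.cong) (simp_all add: mkj[OF k])
      also have "\<dots> = (sg k * c0) * (\<Sum>j<3. uc (idx k) j * y j)" by (simp only: sum_distrib_left)
      finally have "\<bar>TT (n k) \<rho>\<bar> = \<bar>sg k\<bar> * c0 * \<bar>\<Sum>j<3. uc (idx k) j * y j\<bar>"
        using c0_pos by (simp add: abs_mult)
      thus ?thesis using abssg[OF k] by simp
    qed
    have "(\<Sum>k\<in>{1..6}. \<bar>TT (n k) \<rho>\<bar>) = (\<Sum>k\<in>{1..6}. c0 * \<bar>\<Sum>j<3. uc (idx k) j * y j\<bar>)"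
      by (rule sum.cong) (simp_all add: TTk)
    also have "\<dots> = c0 * (\<Sum>k\<in>{1..6}. \<bar>\<Sum>j<3. uc (idx k) j * y j\<bar>)" by (simp only: sum_distrib_left)
    also have "(\<Sum>k\<in>{1..6}. \<bar>\<Sum>j<3. uc (idx k) j * y j\<bar>) = (\<Sum>p\<in>{1..6}. \<bar>\<Sum>j<3. uc p j * y j\<bar>)"
      using sum.reindex[OF inj, of "\<lambda>p. \<bar>\<Sum>j<3. uc p j * y j\<bar>"] unfolding img by simp
    also have "c0 * (\<Sum>p\<in>{1..6}. \<bar>\<Sum>j<3. uc p j * y j\<bar>) \<le> c0 * (2 * phi_gold * sqrt (1 + phi_gold^2))"
      using key[OF yy] c0_pos by (intro mult_left_mono) simp_all
    also have "\<dots> = 1 + sqrt 5" by (rule bound_final)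
    finally show ?thesis .
  qed
  have "\<exists>(L :: nat set) (\<kappa> :: nat \<Rightarrow> real) (P :: nat \<Rightarrow> nat \<Rightarrow> nat \<Rightarrow> real) (\<rho> :: nat \<Rightarrow> complex mat).
        finite L \<and> (\<forall>l\<in>L. \<kappa> l \<ge> 0) \<and> (\<Sum>l\<in>L. \<kappa> l) = 1
        \<and> (\<forall>l\<in>L. \<forall>x\<in>{1..6}. (\<forall>i<2. P l x i \<ge> 0) \<and> (\<Sum>i<2. P l x i) = 1)
        \<and> (\<forall>l\<in>L. density_qubit (\<rho> l))
        \<and> (\<forall>x\<in>{1..6}. \<forall>i<2. \<forall>a<2. \<forall>b<2. assemblage \<eta> (n x) i $$ (a, b)
              = (\<Sum>l\<in>L. complex_of_real (\<kappa> l * P l x i) * \<rho> l $$ (a, b)))"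
    using assms(4) unfolding has_LHS_def .
  then obtain L \<kappa> P \<rho> where H: "finite (L :: nat set) \<and> (\<forall>l\<in>L. \<kappa> l \<ge> 0) \<and> (\<Sum>l\<in>L. \<kappa> l) = 1
        \<and> (\<forall>l\<in>L. \<forall>x\<in>{1..6}. (\<forall>i<2. P l x i \<ge> 0) \<and> (\<Sum>i<2. P l x i) = 1)
        \<and> (\<forall>l\<in>L. density_qubit (\<rho> l))
        \<and> (\<forall>x\<in>{1..6}. \<forall>i<2. \<forall>a<2. \<forall>b<2. assemblage \<eta> (n x) i $$ (a, b)
              = (\<Sum>l\<in>L. complex_of_real (\<kappa> l * P l x i) * \<rho> l $$ (a, b)))"
    by (rule ex4E)
  note H1 = conjunct2[OF H]
  note H2 = conjunct2[OF H1]
  note H3 = conjunct2[OF H2]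
  note H4 = conjunct2[OF H3]
  have kpos: "\<forall>l\<in>L. \<kappa> l \<ge> 0" by (rule conjunct1[OF H1])
  have ksum: "(\<Sum>l\<in>L. \<kappa> l) = 1" by (rule conjunct1[OF H2])
  have Pp: "\<forall>l\<in>L. \<forall>x\<in>{1..6}. (\<forall>i<2. P l x i \<ge> 0) \<and> (\<Sum>i<2. P l x i) = 1" by (rule conjunct1[OF H3])
  have dq: "\<forall>l\<in>L. density_qubit (\<rho> l)" by (rule conjunct1[OF H4])
  have eqs: "\<forall>x\<in>{1..6}. \<forall>i<2. \<forall>a<2. \<forall>b<2. assemblage \<eta> (n x) i $$ (a,b) = (\<Sum>l\<in>L. complex_of_real (\<kappa> l * P l x i) * \<rho> l $$ (a,b))"
    by (rule conjunct2[OF H4])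
  have each: "\<eta> \<le> (\<Sum>l\<in>L. \<kappa> l * \<bar>TT (n k) (\<rho> l)\<bar>)" if k: "k\<in>{1..6}" for k
  proof -
    have T: "TT (n k) (assemblage \<eta> (n k) i) = (\<Sum>l\<in>L. (\<kappa> l * P l k i) * TT (n k) (\<rho> l))" if "i<2" for i
      by (rule TT_lin) (use eqs k that in blast)
    have "- \<eta> = TT (n k) (assemblage \<eta> (n k) 0) - TT (n k) (assemblage \<eta> (n k) 1)"
      using TT_asm[of "n k" \<eta>] nn[OF k] by simp
    also have "\<dots> = (\<Sum>l\<in>L. (\<kappa> l * P l k 0) * TT (n k) (\<rho> l)) - (\<Sum>l\<in>L. (\<kappa> l * P l k 1) * TT (n k) (\<rho> l))"
      using T[of 0] T[of 1] by simp
    finally have e1: "\<eta> = (\<Sum>l\<in>L. (\<kappa> l * P l k 1) * TT (n k) (\<rho> l)) - (\<Sum>l\<in>L. (\<kappa> l * P l k 0) * TT (n k) (\<rho> l))"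
      by linarith
    have "\<eta> = (\<Sum>l\<in>L. \<kappa> l * ((P l k 1 - P l k 0) * TT (n k) (\<rho> l)))"
      unfolding e1 sum_subtractf[symmetric] by (rule sum.cong) (simp_all add: algebra_simps)
    also have "\<dots> \<le> (\<Sum>l\<in>L. \<kappa> l * \<bar>TT (n k) (\<rho> l)\<bar>)"
    proof (rule sum_mono)
      fix l assume l: "l\<in>L"
      have P01: "P l k 0 \<ge> 0" "P l k 1 \<ge> 0" "(\<Sum>i<2. P l k i) = 1" using Pp l k by auto
      have "P l k 0 + P l k 1 = 1" using P01(3) by (simp add: eval_nat_numeral)
      hence a1: "\<bar>P l k 1 - P l k 0\<bar> \<le> 1" using P01 by linarith
      have "(P l k 1 - P l k 0) * TT (n k) (\<rho> l) \<le> \<bar>P l k 1 - P l k 0\<bar> * \<bar>TT (n k) (\<rho> l)\<bar>"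
        by (metis abs_ge_self abs_mult)
      also have "\<dots> \<le> \<bar>TT (n k) (\<rho> l)\<bar>" using a1 by (simp add: mult_left_le_one_le)
      finally show "\<kappa> l * ((P l k 1 - P l k 0) * TT (n k) (\<rho> l)) \<le> \<kappa> l * \<bar>TT (n k) (\<rho> l)\<bar>"
        using kpos l by (intro mult_left_mono) auto
    qed
    finally show ?thesis .
  qed
  have "6 * \<eta> = (\<Sum>k\<in>{1..6::nat}. \<eta>)" by simp
  also have "\<dots> \<le> (\<Sum>k\<in>{1..6}. \<Sum>l\<in>L. \<kappa> l * \<bar>TT (n k) (\<rho> l)\<bar>)" by (rule sum_mono) (rule each)
  also have "\<dots> = (\<Sum>l\<in>L. \<kappa> l * (\<Sum>k\<in>{1..6}. \<bar>TT (n k) (\<rho> l)\<bar>))"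
    by (simp only: sum_distrib_left sum.swap[of _ "{1..6}"])
  also have "\<dots> \<le> (\<Sum>l\<in>L. \<kappa> l * (1 + sqrt 5))"
    by (rule sum_mono, rule mult_left_mono) (use bound dq kpos in auto)
  also have "\<dots> = 1 + sqrt 5" by (simp only: sum_distrib_right[symmetric] ksum) simp
  finally have le: "\<eta> \<le> (1 + sqrt 5) / 6" by simp
  have s5: "sqrt 5 * sqrt 5 = (5::real)" by simp
  have "(1 + sqrt 5) / 6 = (3 + sqrt 5) / (3 * (1 + sqrt 5))"
  proof -
    have pos: "1 + sqrt 5 > (0::real)" by (simp add: add_pos_nonneg)
    have "(1 + sqrt 5) * (3 * (1 + sqrt 5)) = 6 * (3 + sqrt (5::real))"
      using s5 by (simp add: algebra_simps)
    thus ?thesis using pos by (simp add: field_simps)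
  qed
  with le show ?thesis by linarith
qed

end
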